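(* The two-dimensional subalgebras of ${\rm A}_1$ are exactly $\langle e_2,e_3\rangle$, $\langle e_1,e_2\rangle$ and $\langle e_1,\alpha e_2+e_3\rangle$ ($\alpha\in\mathbb{C}$). Up to automorphisms of ${\rm A}_1$, every two-dimensional subalgebra is equivalent to $\langle e_1,e_2\rangle$ or $\langle e_2,e_3\rangle$.
   Context: ${\rm A}_1$ is the complex algebra with basis $e_1,e_2,e_3$ whose only nonzero products of basis elements are $e_1e_i=e_ie_1=e_i$ ($i=1,2,3$). A subalgebra is a linear subspace closed under multiplication (it need not contain $e_1$). Two subalgebras are equivalent up to automorphisms if one is mapped onto the other by an algebra automorphism (invertible linear map $\varphi$ with $\varphi(xy)=\varphi(x)\varphi(y)$). $\langle S\rangle$ denotes the linear span of $S$. *)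

theory Defs
  imports "HOL-Analysis.Analysis"
begin

text \<open>The algebra A1: underlying space complex^3 with basis e1, e2, e3
 (the standard basis vectors), product defined by bilinear extension of the
 multiplication table of basis elements.\<close>

type_synonym A1 = "complex ^ 3"

definition e :: "3 \<Rightarrow> A1" where
  "e i = axis i 1"

abbreviation e1 :: A1 where "e1 \<equiv> e 1"
abbreviation e2 :: A1 where "e2 \<equiv> e 2"
abbreviation e3 :: A1 where "e3 \<equiv> e 3"

text \<open>Products of basis elements: e1 ei = ei e1 = ei, all others zero.\<close>
definition A1_table :: "3 \<Rightarrow> 3 \<Rightarrow> A1" where
  "A1_table i j = (if i = 1 then e j else if j = 1 then e i else 0)"

definition A1_mult :: "A1 \<Rightarrow> A1 \<Rightarrow> A1" where
  "A1_mult x y = (\<Sum>i\<in>UNIV. \<Sum>j\<in>UNIV. (x $ i * y $ j) *s A1_table i j)"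

definition A1_subalgebra :: "A1 set \<Rightarrow> bool" where
  "A1_subalgebra S \<longleftrightarrow> vec.subspace S \<and> (\<forall>x\<in>S. \<forall>y\<in>S. A1_mult x y \<in> S)"

definition A1_automorphism :: "(A1 \<Rightarrow> A1) \<Rightarrow> bool" where
  "A1_automorphism \<phi> \<longleftrightarrow>
     Vector_Spaces.linear ((*s) :: complex \<Rightarrow> A1 \<Rightarrow> A1) (*s) \<phi> \<and> bij \<phi> \<and>
     (\<forall>x y. \<phi> (A1_mult x y) = A1_mult (\<phi> x) (\<phi> y))"

end

theory Submission imports Defs begin

lemma e_comp: "e i $ j = (if j = i then 1 else 0)"
  by (simp add: e_def axis_def)

lemma mult_comp:
  "A1_mult x y $ 1 = x$1 * y$1"
  "A1_mult x y $ 2 = x$1 * y$2 + x$2 * y$1"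
  "A1_mult x y $ 3 = x$1 * y$3 + x$3 * y$1"
  by (simp_all add: A1_mult_def A1_table_def sum_3 e_comp)

lemma span_N: "vec.span {e2, e3} = {x. x$1 = 0}"
proof
  show "vec.span {e2, e3} \<subseteq> {x. x$1 = 0}"
    by (rule vec.span_minimal) (auto simp: e_comp vec.subspace_def)
  show "{x. x$1 = 0} \<subseteq> vec.span {e2, e3}"
  proof
    fix x :: A1 assume "x \<in> {x. x$1 = 0}"
    then have "x = (x$2) *s e2 + (x$3) *s e3"
      by (auto simp: vec_eq_iff forall_3 e_comp)
    also have "\<dots> \<in> vec.span {e2, e3}"
      by (intro vec.span_add vec.span_scale vec.span_base) auto
    finally show "x \<in> vec.span {e2, e3}" .
  qed
qed

lemma span_P: "vec.span {e1, e2} = {x. x$3 = 0}"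
proof
  show "vec.span {e1, e2} \<subseteq> {x. x$3 = 0}"
    by (rule vec.span_minimal) (auto simp: e_comp vec.subspace_def)
  show "{x. x$3 = 0} \<subseteq> vec.span {e1, e2}"
  proof
    fix x :: A1 assume "x \<in> {x. x$3 = 0}"
    then have "x = (x$1) *s e1 + (x$2) *s e2"
      by (auto simp: vec_eq_iff forall_3 e_comp)
    also have "\<dots> \<in> vec.span {e1, e2}"
      by (intro vec.span_add vec.span_scale vec.span_base) auto
    finally show "x \<in> vec.span {e1, e2}" .
  qed
qed

lemma span_Q: "vec.span {e1, a *s e2 + e3} = {x. x$2 = a * x$3}"
proof
  show "vec.span {e1, a *s e2 + e3} \<subseteq> {x. x$2 = a * x$3}"
    by (rule vec.span_minimal) (auto simp: e_comp vec.subspace_def algebra_simps)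
  show "{x. x$2 = a * x$3} \<subseteq> vec.span {e1, a *s e2 + e3}"
  proof
    fix x :: A1 assume "x \<in> {x. x$2 = a * x$3}"
    then have "x = (x$1) *s e1 + (x$3) *s (a *s e2 + e3)"
      by (auto simp: vec_eq_iff forall_3 e_comp)
    also have "\<dots> \<in> vec.span {e1, a *s e2 + e3}"
      by (intro vec.span_add vec.span_scale vec.span_base) auto
    finally show "x \<in> vec.span {e1, a *s e2 + e3}" .
  qed
qed

lemma dim2: 
  assumes "u \<noteq> 0" "v \<notin> vec.span {u}" 
  shows "vec.dim (vec.span {u, v}) = 2"
proof -
  have "v \<noteq> u" using assms vec.span_base by force
  have iu: "vec.independent {u}"
    using assms(1) vec.independent_insert[of u "{}"] by simp
  have "vec.independent (insert v {u})"
    using assms iu by (simp add: vec.independent_insert)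
  moreover have "{u, v} = insert v {u}" by auto
  ultimately have "vec.independent {u, v}" by simp
  then show ?thesis using \<open>v \<noteq> u\<close> vec.dim_eq_card_independent[of "{u,v}"] by simp
qed


lemma sub_N: "A1_subalgebra {x. x$1 = 0}"
  by (auto simp: A1_subalgebra_def vec.subspace_def mult_comp)

lemma sub_P: "A1_subalgebra {x. x$3 = 0}"
  by (auto simp: A1_subalgebra_def vec.subspace_def mult_comp)

lemma sub_Q: "A1_subalgebra {x. x$2 = a * x$3}"
  by (auto simp: A1_subalgebra_def vec.subspace_def mult_comp algebra_simps)

lemma dim_N: "vec.dim (vec.span {e2, e3}) = 2"
  apply (rule dim2)
   apply (simp add: vec_eq_iff e_comp)
  apply (clarsimp simp: vec.span_singleton)
  apply (drule arg_cong[where f="\<lambda>v. v$3"])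
  apply (simp add: e_comp)
  done

lemma dim_P: "vec.dim (vec.span {e1, e2}) = 2"
  apply (rule dim2)
   apply (simp add: vec_eq_iff e_comp)
  apply (clarsimp simp: vec.span_singleton)
  apply (drule arg_cong[where f="\<lambda>v. v$2"])
  apply (simp add: e_comp)
  done

lemma dim_Q: "vec.dim (vec.span {e1, a *s e2 + e3}) = 2"
  apply (rule dim2)
   apply (simp add: vec_eq_iff e_comp)
  apply (clarsimp simp: vec.span_singleton)
  apply (drule arg_cong[where f="\<lambda>v. v$3"])
  apply (simp add: e_comp)
  done

lemma classify:
  assumes sa: "A1_subalgebra S" and d: "vec.dim S = 2"
  shows "S = vec.span {e2, e3} \<or> S = vec.span {e1, e2} \<or>
             (\<exists>\<alpha>::complex. S = vec.span {e1, \<alpha> *s e2 + e3})"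
proof (cases "\<forall>x\<in>S. x$1 = 0")
  case True
  have sS: "vec.subspace S" using sa by (simp add: A1_subalgebra_def)
  have "S = vec.span {e2, e3}"
    apply (rule vec.subspace_dim_equal[OF sS vec.subspace_span])
    using True d dim_N by (auto simp: span_N)
  then show ?thesis by blast
next
  case False
  have sS: "vec.subspace S" using sa by (simp add: A1_subalgebra_def)
  have cl: "\<And>x y. x \<in> S \<Longrightarrow> y \<in> S \<Longrightarrow> A1_mult x y \<in> S"
    using sa by (simp add: A1_subalgebra_def)
  from False obtain x where x: "x \<in> S" "x$1 \<noteq> 0" by blast
  define y where "y = (1 / x$1) *s x"
  have yS: "y \<in> S" unfolding y_def using x vec.subspace_scale[OF sS] by blast
  have "2 *s y - A1_mult y y \<in> S"
    using yS cl vec.subspace_scale[OF sS] vec.subspace_diff[OF sS] by blast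
  moreover have "2 *s y - A1_mult y y = e1"
    using x by (simp add: y_def vec_eq_iff forall_3 mult_comp e_comp)
  ultimately have e1S: "e1 \<in> S" by simp
  have "\<exists>z\<in>S. z \<notin> vec.span {e1}"
  proof (rule ccontr)
    assume "\<not> ?thesis"
    then have "S \<subseteq> vec.span {e1}" by blast
    then have "vec.dim S \<le> card {e1}" by (rule vec.dim_le_card) simp
    then show False using d by simp
  qed
  then obtain z where z: "z \<in> S" "z \<notin> vec.span {e1}" by blast
  define n where "n = z - (z$1) *s e1"
  have nS: "n \<in> S" unfolding n_def
    using z e1S vec.subspace_scale[OF sS] vec.subspace_diff[OF sS] by blast
  have n1: "n$1 = 0" by (simp add: n_def e_comp)
  have nz: "n \<noteq> 0"
  proof
    assume "n = 0"
    then have "z = (z$1) *s e1" by (simp add: n_def)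
    then have "z \<in> vec.span {e1}" by (metis vec.span_base vec.span_scale singletonI)
    then show False using z by simp
  qed
  show ?thesis
  proof (cases "n$3 = 0")
    case False
    define a where "a = n$2 / n$3"
    have "a *s e2 + e3 = (1 / n$3) *s n"
      using False n1 by (simp add: a_def vec_eq_iff forall_3 e_comp)
    then have "a *s e2 + e3 \<in> S" using nS vec.subspace_scale[OF sS] by simp
    then have "vec.span {e1, a *s e2 + e3} \<subseteq> S"
      using e1S by (intro vec.span_minimal sS) auto
    then have "vec.span {e1, a *s e2 + e3} = S"
      using d dim_Q[of a] by (intro vec.subspace_dim_equal sS vec.subspace_span) auto
    then show ?thesis by blast
  next
    case True
    then have n2: "n$2 \<noteq> 0" using nz n1 by (auto simp: vec_eq_iff forall_3)
    have "e2 = (1 / n$2) *s n"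
      using True n1 n2 by (simp add: vec_eq_iff forall_3 e_comp)
    then have "e2 \<in> S" using nS vec.subspace_scale[OF sS] by simp
    then have "vec.span {e1, e2} \<subseteq> S"
      using e1S by (intro vec.span_minimal sS) auto
    then have "vec.span {e1, e2} = S"
      using d dim_P by (intro vec.subspace_dim_equal sS vec.subspace_span) auto
    then show ?thesis by blast
  qed
qed

lemma auto_id: "A1_automorphism id"
  by (simp add: A1_automorphism_def vec.linear_id)

definition phi :: "complex \<Rightarrow> A1 \<Rightarrow> A1" where
  "phi a x = x$1 *s e1 + x$3 *s e2 + (x$2 - a * x$3) *s e3"

definition psi :: "complex \<Rightarrow> A1 \<Rightarrow> A1" where
  "psi a y = y$1 *s e1 + (y$3 + a * y$2) *s e2 + y$2 *s e3"

lemma phi_comp: "phi a x $ 1 = x$1" "phi a x $ 2 = x$3" "phi a x $ 3 = x$2 - a * x$3"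
  by (simp_all add: phi_def e_comp)

lemma psi_comp: "psi a x $ 1 = x$1" "psi a x $ 2 = x$3 + a * x$2" "psi a x $ 3 = x$2"
  by (simp_all add: psi_def e_comp)

lemma auto_phi: "A1_automorphism (phi a)"
  unfolding A1_automorphism_def
proof (intro conjI allI)
  show "Vector_Spaces.linear ((*s) :: complex \<Rightarrow> A1 \<Rightarrow> A1) (*s) (phi a)"
    unfolding Vector_Spaces.linear_iff
    by (simp add: vec.vector_space_axioms vec_eq_iff forall_3 phi_comp algebra_simps)
  show "bij (phi a)"
    by (rule o_bij[where g = "psi a"])
       (simp_all add: fun_eq_iff vec_eq_iff forall_3 phi_comp psi_comp)
  fix x y
  show "phi a (A1_mult x y) = A1_mult (phi a x) (phi a y)"
    by (simp add: vec_eq_iff forall_3 phi_comp mult_comp algebra_simps)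
qed

lemma phi_image: "phi a ` {x. x$2 = a * x$3} = {x. x$3 = 0}"
proof
  show "phi a ` {x. x$2 = a * x$3} \<subseteq> {x. x$3 = 0}" by (auto simp: phi_comp)
  show "{x. x$3 = 0} \<subseteq> phi a ` {x. x$2 = a * x$3}"
  proof
    fix y :: A1 assume y: "y \<in> {x. x$3 = 0}"
    have "y = phi a (psi a y)" by (simp add: vec_eq_iff forall_3 phi_comp psi_comp)
    moreover have "psi a y \<in> {x. x$2 = a * x$3}" using y by (simp add: psi_comp)
    ultimately show "y \<in> phi a ` {x. x$2 = a * x$3}" by blast
  qed
qed

theorem mainTheorem5:
  shows "(\<forall>S. (A1_subalgebra S \<and> vec.dim S = 2) \<longleftrightarrow>
            (S = vec.span {e2, e3} \<or> S = vec.span {e1, e2} \<or>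
             (\<exists>\<alpha>::complex. S = vec.span {e1, \<alpha> *s e2 + e3})))
       \<and> (\<forall>S. A1_subalgebra S \<and> vec.dim S = 2 \<longrightarrow>
            (\<exists>\<phi>. A1_automorphism \<phi> \<and>
                 (\<phi> ` S = vec.span {e1, e2} \<or> \<phi> ` S = vec.span {e2, e3})))"
proof (rule conjI; intro allI impI iffI)
  fix S assume "A1_subalgebra S \<and> vec.dim S = 2"
  then show "S = vec.span {e2, e3} \<or> S = vec.span {e1, e2} \<or>
             (\<exists>\<alpha>::complex. S = vec.span {e1, \<alpha> *s e2 + e3})"
    using classify by blast
next
  fix S assume "S = vec.span {e2, e3} \<or> S = vec.span {e1, e2} \<or>
             (\<exists>\<alpha>::complex. S = vec.span {e1, \<alpha> *s e2 + e3})"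
  moreover have "A1_subalgebra (vec.span {e2, e3}) \<and> vec.dim (vec.span {e2, e3}) = 2"
    using sub_N dim_N span_N by simp
  moreover have "A1_subalgebra (vec.span {e1, e2}) \<and> vec.dim (vec.span {e1, e2}) = 2"
    using sub_P dim_P span_P by simp
  moreover have "\<And>a. A1_subalgebra (vec.span {e1, a *s e2 + e3}) \<and> vec.dim (vec.span {e1, a *s e2 + e3}) = 2"
    using sub_Q dim_Q span_Q by simp
  ultimately show "A1_subalgebra S \<and> vec.dim S = 2" by blast
next
  fix S assume "A1_subalgebra S \<and> vec.dim S = 2"
  then have "S = vec.span {e2, e3} \<or> S = vec.span {e1, e2} \<or>
             (\<exists>\<alpha>::complex. S = vec.span {e1, \<alpha> *s e2 + e3})"
    using classify by blast
  then show "\<exists>\<phi>. A1_automorphism \<phi> \<and>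
                 (\<phi> ` S = vec.span {e1, e2} \<or> \<phi> ` S = vec.span {e2, e3})"
  proof (elim disjE exE)
    assume "S = vec.span {e2, e3}" then show ?thesis using auto_id by auto
  next
    assume "S = vec.span {e1, e2}" then show ?thesis using auto_id by auto
  next
    fix a assume "S = vec.span {e1, a *s e2 + e3}"
    then have "phi a ` S = vec.span {e1, e2}" by (simp add: span_Q span_P phi_image)
    then show ?thesis using auto_phi by blast
  qed
qed

end
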